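(* Let $\mathcal{P}$ be a statistical model for the distribution of two independent samples $\mathbb{X}=(X_i)_{1\le i\le n}$ and $\mathbb{Y}=(Y_j)_{1\le j\le m}$, each i.i.d., with square-integrable marginal distributions $\mathbb{P}_X,\mathbb{P}_Y$ on $\mathbb{R}^d$ (or a separable Hilbert space), with means $\mu=\mathbb{E}[X_1]$, $\nu=\mathbb{E}[Y_1]$ and covariances $\Sigma=\mathrm{Cov}(X_1)$, $S=\mathrm{Cov}(Y_1)$. For covariances $(\Sigma,S)$ let $\mathcal{P}_{\Sigma,S}=\{\mathbb{P}\in\mathcal{P}:\mathrm{Cov}(\mathbb{P}_X)=\Sigma,\ \mathrm{Cov}(\mathbb{P}_Y)=S\}$. Let $U$ be a real-valued statistic of the data and assume: (A1) for every $(\Sigma,S)$ and every $\alpha\in(0,1)$ there exist $q_1=q_1(\Sigma,S,\alpha)\ge0$ and $q_2=q_2(\Sigma,S,\alpha)\ge 0$ such that for every $\mathbb{P}\in\mathcal{P}_{\Sigma,S}$, $\mathbb{P}\big(|U-\|\mu-\nu\|^2|\ge \|\mu-\nu\|q_1+q_2\big)\le\alpha$; (A2) for every $\alpha\in(0,1)$ there exist statistics $\widehat Q_1(\alpha),\widehat Q_2(\alpha)$ with values in $\mathbb{R}_+$ such that for every $(\Sigma,S)$ and every $\mathbb{P}\in\mathcal{P}_{\Sigma,S}$, $\mathbb{P}\big(|q_1(\Sigma,S,\alpha)-\widehat Q_1(\alpha)|\ge \tfrac12 q_1(\Sigma,S,\alpha)\big)\le\alpha$ and $\mathbb{P}\big(|q_2(\Sigma,S,\alpha)-\widehat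 Q_2(\alpha)|\ge \tfrac12 q_2(\Sigma,S,\alpha)\big)\le\alpha$. Given $\eta\ge0$ and $\alpha\in(0,1)$, define the test $T=\mathbf{1}\{U-\eta^2>2\eta\widehat Q_1(\alpha)+2\widehat Q_2(\alpha)\}$. Then for any $(\Sigma,S)$, writing $q_i=q_i(\Sigma,S,\alpha)$, provided $\delta>2q_1+\min\big(2\sqrt{q_2},\,2\eta^{-1}q_2\big)$ (with $2\eta^{-1}q_2:=+\infty$ when $\eta=0$), it holds for every $\mathbb{P}\in\mathcal{P}_{\Sigma,S}$: $\mathbb{P}(T=1)\le3\alpha$ if $\|\mu-\nu\|\le\eta$, and $\mathbb{P}(T=0)\le 3\alpha$ if $\|\mu-\nu\|>\eta+\delta$.
   Context: $\|\cdot\|$ denotes the Euclidean (Hilbert) norm. A distribution $\mathbb{P}\in\mathcal{P}$ specifies the marginal laws $\mathbb{P}_X,\mathbb{P}_Y$ of the two independent samples; $\mathbb{P}(\cdot)$ denotes probability under that joint law. *)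

theory Defs
  imports "HOL-Probability.Probability"
begin

definition sq_int_law :: "'a::{real_inner,banach,second_countable_topology} measure \<Rightarrow> bool" where
  "sq_int_law P \<longleftrightarrow> prob_space P \<and> sets P = sets borel \<and> integrable P (\<lambda>x. (norm x)\<^sup>2)"

definition mean :: "'a::{real_inner,banach,second_countable_topology} measure \<Rightarrow> 'a" where
  "mean P = (\<integral>x. x \<partial>P)"

text \<open>Covariance operator, as the bilinear form (u,v) |-> E[<X-mu,u><X-mu,v>].\<close>
definition cov :: "'a::{real_inner,banach,second_countable_topology} measure \<Rightarrow> 'a \<Rightarrow> 'a \<Rightarrow> real" where
  "cov P u v = (\<integral>x. ((x - mean P) \<bullet> u) * ((x - mean P) \<bullet> v) \<partial>P)"

text \<open>Joint law of the two independent i.i.d. samples X_0..X_{n-1} ~ PX and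
  Y_0..Y_{m-1} ~ PY (data = pair of sample vectors).\<close>
definition joint_law :: "nat \<Rightarrow> nat \<Rightarrow> 'a::{real_inner,banach,second_countable_topology} measure
    \<Rightarrow> 'a measure \<Rightarrow> ((nat \<Rightarrow> 'a) \<times> (nat \<Rightarrow> 'a)) measure" where
  "joint_law n m PX PY = (PiM {..<n} (\<lambda>_. PX)) \<Otimes>\<^sub>M (PiM {..<m} (\<lambda>_. PY))"

definition test_T :: "('d \<Rightarrow> real) \<Rightarrow> ('d \<Rightarrow> real) \<Rightarrow> ('d \<Rightarrow> real) \<Rightarrow> real \<Rightarrow> 'd \<Rightarrow> nat" where
  "test_T U Q1 Q2 \<eta> \<omega> = (if U \<omega> - \<eta>\<^sup>2 > 2 * \<eta> * Q1 \<omega> + 2 * Q2 \<omega> then 1 else 0)"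

end

theory Submission
  imports Defs
begin

lemma union3_bound:
  assumes "prob_space M" "A \<in> sets M" "B1 \<in> sets M" "B2 \<in> sets M" "B3 \<in> sets M"
    and "A \<subseteq> B1 \<union> B2 \<union> B3"
    and "measure M B1 \<le> a" "measure M B2 \<le> a" "measure M B3 \<le> a"
  shows "measure M A \<le> 3 * a"
proof -
  interpret prob_space M by fact
  have "measure M A \<le> measure M (B1 \<union> B2 \<union> B3)"
    using assms by (intro finite_measure_mono) auto
  also have "\<dots> \<le> measure M (B1 \<union> B2) + measure M B3"
    using assms by (intro measure_Un_le) auto
  also have "\<dots> \<le> measure M B1 + measure M B2 + measure M B3"
    using assms measure_Un_le[of B1 M B2] by auto
  finally show ?thesis using assms by linarith
qed

theorem theorem1:
  fixes n m :: nat
    and \<P> :: "('a::{real_inner,banach,second_countable_topology} measure \<times> 'a measure) set"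
    and U :: "(nat \<Rightarrow> 'a) \<times> (nat \<Rightarrow> 'a) \<Rightarrow> real"
    and Q1 Q2 :: "real \<Rightarrow> (nat \<Rightarrow> 'a) \<times> (nat \<Rightarrow> 'a) \<Rightarrow> real"
    and q1 q2 :: "('a \<Rightarrow> 'a \<Rightarrow> real) \<Rightarrow> ('a \<Rightarrow> 'a \<Rightarrow> real) \<Rightarrow> real \<Rightarrow> real"
    and PX PY :: "'a measure"
    and \<eta> \<alpha> \<delta> :: real
  assumes n_pos: "n \<ge> 1" and m_pos: "m \<ge> 1"
    and model: "\<forall>(PX', PY') \<in> \<P>. sq_int_law PX' \<and> sq_int_law PY'"
    and U_meas: "\<forall>(PX', PY') \<in> \<P>. U \<in> borel_measurable (joint_law n m PX' PY')"
    and q_nonneg: "\<forall>\<Sigma> S \<beta>. 0 < \<beta> \<and> \<beta> < 1 \<longrightarrow> q1 \<Sigma> S \<beta> \<ge> 0 \<and> q2 \<Sigma> S \<beta> \<ge> 0"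
    and A1: "\<forall>\<beta>. 0 < \<beta> \<and> \<beta> < 1 \<longrightarrow> (\<forall>(PX', PY') \<in> \<P>.
              measure (joint_law n m PX' PY')
                {\<omega> \<in> space (joint_law n m PX' PY').
                   \<bar>U \<omega> - (norm (mean PX' - mean PY'))\<^sup>2\<bar>
                     \<ge> norm (mean PX' - mean PY') * q1 (cov PX') (cov PY') \<beta> + q2 (cov PX') (cov PY') \<beta>}
              \<le> \<beta>)"
    and Q_meas: "\<forall>\<beta>. 0 < \<beta> \<and> \<beta> < 1 \<longrightarrow> (\<forall>(PX', PY') \<in> \<P>.
              Q1 \<beta> \<in> borel_measurable (joint_law n m PX' PY') \<and>
              Q2 \<beta> \<in> borel_measurable (joint_law n m PX' PY') \<and>
              (\<forall>\<omega> \<in> space (joint_law n m PX' PY'). Q1 \<beta> \<omega> \<ge> 0 \<and> Q2 \<beta> \<omega> \<ge> 0))"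
    and A2: "\<forall>\<beta>. 0 < \<beta> \<and> \<beta> < 1 \<longrightarrow> (\<forall>(PX', PY') \<in> \<P>.
              measure (joint_law n m PX' PY')
                {\<omega> \<in> space (joint_law n m PX' PY').
                   \<bar>q1 (cov PX') (cov PY') \<beta> - Q1 \<beta> \<omega>\<bar> \<ge> q1 (cov PX') (cov PY') \<beta> / 2} \<le> \<beta> \<and>
              measure (joint_law n m PX' PY')
                {\<omega> \<in> space (joint_law n m PX' PY').
                   \<bar>q2 (cov PX') (cov PY') \<beta> - Q2 \<beta> \<omega>\<bar> \<ge> q2 (cov PX') (cov PY') \<beta> / 2} \<le> \<beta>)"
    and P_in: "(PX, PY) \<in> \<P>"
    and eta_nonneg: "\<eta> \<ge> 0"
    and alpha: "0 < \<alpha>" "\<alpha> < 1"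
    and delta: "\<delta> > 2 * q1 (cov PX) (cov PY) \<alpha> +
                  (if \<eta> = 0 then 2 * sqrt (q2 (cov PX) (cov PY) \<alpha>)
                   else min (2 * sqrt (q2 (cov PX) (cov PY) \<alpha>)) (2 * q2 (cov PX) (cov PY) \<alpha> / \<eta>))"
  shows "(norm (mean PX - mean PY) \<le> \<eta> \<longrightarrow>
           measure (joint_law n m PX PY)
             {\<omega> \<in> space (joint_law n m PX PY). test_T U (Q1 \<alpha>) (Q2 \<alpha>) \<eta> \<omega> = 1} \<le> 3 * \<alpha>)
       \<and> (norm (mean PX - mean PY) > \<eta> + \<delta> \<longrightarrow>
           measure (joint_law n m PX PY)
             {\<omega> \<in> space (joint_law n m PX PY). test_T U (Q1 \<alpha>) (Q2 \<alpha>) \<eta> \<omega> = 0} \<le> 3 * \<alpha>)"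
proof -
  define M where "M = joint_law n m PX PY"
  define D where "D = norm (mean PX - mean PY)"
  define a1 where "a1 = q1 (cov PX) (cov PY) \<alpha>"
  define a2 where "a2 = q2 (cov PX) (cov PY) \<alpha>"
  have lawX: "sq_int_law PX" and lawY: "sq_int_law PY" using model P_in by auto
  have PM: "prob_space M" unfolding M_def joint_law_def
    using lawX lawY unfolding sq_int_law_def
    by (intro prob_space_pair prob_space_PiM) auto
  have Um: "U \<in> borel_measurable M" using U_meas P_in unfolding M_def by auto
  have Q1m: "Q1 \<alpha> \<in> borel_measurable M" and Q2m: "Q2 \<alpha> \<in> borel_measurable M"
    using Q_meas P_in alpha unfolding M_def by auto
  have a1nn: "a1 \<ge> 0" and a2nn: "a2 \<ge> 0" using q_nonneg alpha unfolding a1_def a2_def by auto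
  define B1 where "B1 = {\<omega> \<in> space M. \<bar>U \<omega> - D\<^sup>2\<bar> \<ge> D * a1 + a2}"
  define B2 where "B2 = {\<omega> \<in> space M. \<bar>a1 - Q1 \<alpha> \<omega>\<bar> \<ge> a1 / 2}"
  define B3 where "B3 = {\<omega> \<in> space M. \<bar>a2 - Q2 \<alpha> \<omega>\<bar> \<ge> a2 / 2}"
  have mB1: "measure M B1 \<le> \<alpha>" using A1 P_in alpha
    unfolding B1_def M_def D_def a1_def a2_def by auto
  have mB23: "measure M B2 \<le> \<alpha> \<and> measure M B3 \<le> \<alpha>" using A2 P_in alpha
    unfolding B2_def B3_def M_def a1_def a2_def by auto
  have sB1: "B1 \<in> sets M" unfolding B1_def using Um by measurable
  have sB2: "B2 \<in> sets M" unfolding B2_def using Q1m by measurable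
  have sB3: "B3 \<in> sets M" unfolding B3_def using Q2m by measurable
  have sT: "{\<omega> \<in> space M. test_T U (Q1 \<alpha>) (Q2 \<alpha>) \<eta> \<omega> = k} \<in> sets M" for k
    unfolding test_T_def using Um Q1m Q2m by measurable
  have Dnn: "D \<ge> 0" unfolding D_def by simp
  show ?thesis
  proof (intro conjI impI)
    assume H: "norm (mean PX - mean PY) \<le> \<eta>"
    hence HD: "D \<le> \<eta>" unfolding D_def .
    have "{\<omega> \<in> space M. test_T U (Q1 \<alpha>) (Q2 \<alpha>) \<eta> \<omega> = 1} \<subseteq> B1 \<union> B2 \<union> B3"
    proof
      fix \<omega> assume w: "\<omega> \<in> {\<omega> \<in> space M. test_T U (Q1 \<alpha>) (Q2 \<alpha>) \<eta> \<omega> = 1}"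
      show "\<omega> \<in> B1 \<union> B2 \<union> B3"
      proof (rule ccontr)
        assume "\<omega> \<notin> B1 \<union> B2 \<union> B3"
        with w have g1: "\<bar>U \<omega> - D\<^sup>2\<bar> < D * a1 + a2" and g2: "\<bar>a1 - Q1 \<alpha> \<omega>\<bar> < a1 / 2"
          and g3: "\<bar>a2 - Q2 \<alpha> \<omega>\<bar> < a2 / 2" and ws: "\<omega> \<in> space M"
          unfolding B1_def B2_def B3_def by auto
        have T: "U \<omega> - \<eta>\<^sup>2 > 2 * \<eta> * Q1 \<alpha> \<omega> + 2 * Q2 \<alpha> \<omega>"
          using w unfolding test_T_def by (auto split: if_splits)
        have "D\<^sup>2 \<le> \<eta>\<^sup>2" using HD Dnn by (simp add: power_mono)
        moreover have "D * a1 \<le> \<eta> * a1" using HD a1nn by (simp add: mult_right_mono)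
        moreover have "\<eta> * a1 \<le> 2 * \<eta> * Q1 \<alpha> \<omega>"
        proof -
          have "a1 \<le> 2 * Q1 \<alpha> \<omega>" using g2 abs_ge_self[of "a1 - Q1 \<alpha> \<omega>"] abs_ge_minus_self[of "a1 - Q1 \<alpha> \<omega>"] by linarith
          hence "\<eta> * a1 \<le> \<eta> * (2 * Q1 \<alpha> \<omega>)" using eta_nonneg by (rule mult_left_mono)
          thus ?thesis by simp
        qed
        ultimately show False using g1 g3 T abs_ge_self[of "U \<omega> - D\<^sup>2"] abs_ge_minus_self[of "U \<omega> - D\<^sup>2"] abs_ge_self[of "a2 - Q2 \<alpha> \<omega>"] abs_ge_minus_self[of "a2 - Q2 \<alpha> \<omega>"] by linarith
      qed
    qed
    thus "measure (joint_law n m PX PY)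
             {\<omega> \<in> space (joint_law n m PX PY). test_T U (Q1 \<alpha>) (Q2 \<alpha>) \<eta> \<omega> = 1} \<le> 3 * \<alpha>"
      using union3_bound[OF PM sT sB1 sB2 sB3 _ mB1] mB23 unfolding M_def by auto
  next
    assume H: "norm (mean PX - mean PY) > \<eta> + \<delta>"
    hence HD: "D > \<eta> + \<delta>" unfolding D_def .
    define t where "t = D - \<eta>"
    have del: "\<delta> > 2 * a1 + (if \<eta> = 0 then 2 * sqrt a2 else min (2 * sqrt a2) (2 * a2 / \<eta>))"
      using delta unfolding a1_def a2_def .
    have dnn: "\<delta> \<ge> 0"
    proof -
      have "0 \<le> (if \<eta> = 0 then 2 * sqrt a2 else min (2 * sqrt a2) (2 * a2 / \<eta>))"
        using a2nn eta_nonneg by auto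
      thus ?thesis using del a1nn by linarith
    qed
    have etaD: "\<eta> \<le> D" using HD dnn by linarith
    have key: "D\<^sup>2 - \<eta>\<^sup>2 > a1 * (D + 3 * \<eta>) + 4 * a2"
    proof -
      obtain x where x: "\<delta> > 2 * a1 + x" and xc: "x * (D + \<eta>) \<ge> 4 * a2" and xnn: "x \<ge> 0"
      proof (cases "\<eta> = 0 \<or> 2 * sqrt a2 \<le> 2 * a2 / \<eta>")
        case True
        have "2 * sqrt a2 \<le> \<delta>" using del True a1nn by (auto split: if_splits)
        moreover have "\<delta> \<le> D + \<eta>" using HD eta_nonneg by auto
        ultimately have "2 * sqrt a2 \<le> D + \<eta>" by linarith
        hence "2 * sqrt a2 * (2 * sqrt a2) \<le> 2 * sqrt a2 * (D + \<eta>)"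
          using a2nn by (intro mult_left_mono) auto
        hence "4 * a2 \<le> 2 * sqrt a2 * (D + \<eta>)" using a2nn by simp
        thus ?thesis using that[of "2 * sqrt a2"] del True a2nn by (auto split: if_splits)
      next
        case False
        hence e: "\<eta> > 0" using eta_nonneg by auto
        have "2 * a2 / \<eta> * (D + \<eta>) \<ge> 2 * a2 / \<eta> * (2 * \<eta>)"
          using HD del e a2nn a1nn etaD
          by (intro mult_left_mono) (auto split: if_splits)
        hence "2 * a2 / \<eta> * (D + \<eta>) \<ge> 4 * a2" using e by simp
        thus ?thesis using that[of "2 * a2 / \<eta>"] del False e a2nn by (auto split: if_splits)
      qed
      have tpos: "t > 2 * a1 + x" using x HD unfolding t_def by linarith
      have Dp: "D + \<eta> > 0" using HD eta_nonneg x a1nn xnn by linarith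
      have "D\<^sup>2 - \<eta>\<^sup>2 = t * (D + \<eta>)" unfolding t_def by (simp add: power2_eq_square algebra_simps)
      also have "\<dots> > (2 * a1 + x) * (D + \<eta>)" using tpos Dp by simp
      finally have "D\<^sup>2 - \<eta>\<^sup>2 > 2 * a1 * (D + \<eta>) + x * (D + \<eta>)" by (simp add: algebra_simps)
      moreover have "2 * a1 * (D + \<eta>) \<ge> a1 * (D + 3 * \<eta>)"
        using a1nn etaD mult_left_mono[of "D + 3 * \<eta>" "2 * (D + \<eta>)" a1] by (simp add: algebra_simps)
      ultimately show ?thesis using xc by linarith
    qed
    have "{\<omega> \<in> space M. test_T U (Q1 \<alpha>) (Q2 \<alpha>) \<eta> \<omega> = 0} \<subseteq> B1 \<union> B2 \<union> B3"
    proof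
      fix \<omega> assume w: "\<omega> \<in> {\<omega> \<in> space M. test_T U (Q1 \<alpha>) (Q2 \<alpha>) \<eta> \<omega> = 0}"
      show "\<omega> \<in> B1 \<union> B2 \<union> B3"
      proof (rule ccontr)
        assume "\<omega> \<notin> B1 \<union> B2 \<union> B3"
        with w have g1: "\<bar>U \<omega> - D\<^sup>2\<bar> < D * a1 + a2" and g2: "\<bar>a1 - Q1 \<alpha> \<omega>\<bar> < a1 / 2"
          and g3: "\<bar>a2 - Q2 \<alpha> \<omega>\<bar> < a2 / 2" and ws: "\<omega> \<in> space M"
          unfolding B1_def B2_def B3_def by auto
        have T: "U \<omega> - \<eta>\<^sup>2 \<le> 2 * \<eta> * Q1 \<alpha> \<omega> + 2 * Q2 \<alpha> \<omega>"
          using w unfolding test_T_def by (auto split: if_splits)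
        have "2 * \<eta> * Q1 \<alpha> \<omega> \<le> 3 * \<eta> * a1"
        proof -
          have "2 * Q1 \<alpha> \<omega> \<le> 3 * a1" using g2 abs_ge_self[of "a1 - Q1 \<alpha> \<omega>"] abs_ge_minus_self[of "a1 - Q1 \<alpha> \<omega>"] by linarith
          hence "\<eta> * (2 * Q1 \<alpha> \<omega>) \<le> \<eta> * (3 * a1)" using eta_nonneg by (rule mult_left_mono)
          thus ?thesis by simp
        qed
        then show False using g1 g3 T key abs_ge_self[of "U \<omega> - D\<^sup>2"] abs_ge_minus_self[of "U \<omega> - D\<^sup>2"] abs_ge_self[of "a2 - Q2 \<alpha> \<omega>"] abs_ge_minus_self[of "a2 - Q2 \<alpha> \<omega>"] by (simp add: algebra_simps)
      qed
    qed
    thus "measure (joint_law n m PX PY)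
             {\<omega> \<in> space (joint_law n m PX PY). test_T U (Q1 \<alpha>) (Q2 \<alpha>) \<eta> \<omega> = 0} \<le> 3 * \<alpha>"
      using union3_bound[OF PM sT sB1 sB2 sB3 _ mB1] mB23 unfolding M_def by auto
  qed
qed

end
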